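(* Let $G$ be a finitely generated virtually nilpotent group and let $A$ be a finite subgroup of $\operatorname{Aut}(G)$ of cardinality $n$. Then the $n$-valued coset group $X=(G,A)$ has polynomial growth: for a finite generating set of $X$ there are constants $C,k>0$ such that $|B(e,r)|\le Cr^k$ for all $r\ge1$, where $B(e,r)$ is the ball of radius $r$ centred at the unit $e$ of $X$.
   Context: An $n$-valued group is a set $X$ with a map $*:X\times X\to\operatorname{Sym}^nX$ ($n$-multi-sets, i.e. unordered $n$-tuples with multiplicities) that is associative (the $n^2$-multi-sets $[x*(y*z)_1,\dots,x*(y*z)_n]$ and $[(x*y)_1*z,\dots,(x*y)_n*z]$ coincide), has a unit $e$ with $e*x=x*e=[x,\dots,x]$, and has an inverse map $\operatorname{inv}$ with $e\in\operatorname{inv}(x)*x$, $e\in x*\operatorname{inv}(x)$. Coset group: for a group $G$ and a finite subgroup $A\le\operatorname{Aut}(G)$ with $|A|=n$, let $X=G/A$ be the set of $A$-orbits and $\pi:G\to X$ the projection; the $n$-valued multiplication is $\pi(g)*\pi(h)=[\pi(g\,a(h)) : a\in A]$, the unit is $\pi(e_G)$ and $\operatorname{inv}(\pi(g))=\pi(g^{-1})$. For a multi-set $M$, $\operatorname{Set}(M)$ is the set of its distinct elements. $S\subseteq X$ generates $X$ if every element lies in $\operatorname{Set}(s_1*\dots*s_m)$ for some $s_i\in S$. The ball of radius $r$ centred at $x$ with respect to $S$ is $B(x,r)=\{y:\exists m\le r,\ s_{i_1},\dots,s_{i_m}\in S,\ y\in\operatorname{Set}(x*s_{i_1}*\dots*s_{i_m})\}$.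 A group is virtually nilpotent if it has a nilpotent subgroup of finite index. *)

theory Defs
  imports "HOL-Algebra.Algebra" "HOL-Library.Multiset"
begin

definition commutator_subgroup :: "('a, 'b) monoid_scheme \<Rightarrow> 'a set \<Rightarrow> 'a set \<Rightarrow> 'a set" where
  "commutator_subgroup G H K =
     generate G {x \<otimes>\<^bsub>G\<^esub> y \<otimes>\<^bsub>G\<^esub> inv\<^bsub>G\<^esub> x \<otimes>\<^bsub>G\<^esub> inv\<^bsub>G\<^esub> y | x y. x \<in> H \<and> y \<in> K}"

fun lower_central :: "('a, 'b) monoid_scheme \<Rightarrow> nat \<Rightarrow> 'a set" where
  "lower_central G 0 = carrier G"
| "lower_central G (Suc i) = commutator_subgroup G (lower_central G i) (carrier G)"

definition nilpotent_group :: "('a, 'b) monoid_scheme \<Rightarrow> bool" where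
  "nilpotent_group G \<longleftrightarrow> group G \<and> (\<exists>c. lower_central G c = {\<one>\<^bsub>G\<^esub>})"

definition finitely_generated :: "('a, 'b) monoid_scheme \<Rightarrow> bool" where
  "finitely_generated G \<longleftrightarrow> (\<exists>S. finite S \<and> S \<subseteq> carrier G \<and> generate G S = carrier G)"

definition virtually_nilpotent :: "('a, 'b) monoid_scheme \<Rightarrow> bool" where
  "virtually_nilpotent G \<longleftrightarrow>
     (\<exists>H. subgroup H G \<and> finite (rcosets\<^bsub>G\<^esub> H) \<and> nilpotent_group (G\<lparr>carrier := H\<rparr>))"

text \<open>Automorphisms are represented as functions restricted to the carrier (extensional),
  so that distinct automorphisms are distinct HOL functions.\<close>
definition Aut :: "('a, 'b) monoid_scheme \<Rightarrow> ('a \<Rightarrow> 'a) set" where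
  "Aut G = iso G G \<inter> extensional (carrier G)"

definition aut_subgroup :: "('a, 'b) monoid_scheme \<Rightarrow> ('a \<Rightarrow> 'a) set \<Rightarrow> bool" where
  "aut_subgroup G A \<longleftrightarrow> A \<subseteq> Aut G \<and>
     (\<lambda>x\<in>carrier G. x) \<in> A \<and>
     (\<forall>a\<in>A. \<forall>b\<in>A. (\<lambda>x\<in>carrier G. a (b x)) \<in> A) \<and>
     (\<forall>a\<in>A. restrict (inv_into (carrier G) a) (carrier G) \<in> A)"

definition orbit :: "('a \<Rightarrow> 'a) set \<Rightarrow> 'a \<Rightarrow> 'a set" where
  "orbit A g = (\<lambda>a. a g) ` A"

text \<open>Underlying set X = G/A of A-orbits, with projection pi = orbit A.\<close>
definition coset_carrier :: "('a, 'b) monoid_scheme \<Rightarrow> ('a \<Rightarrow> 'a) set \<Rightarrow> 'a set set" where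
  "coset_carrier G A = orbit A ` carrier G"

definition rep :: "('a, 'b) monoid_scheme \<Rightarrow> ('a \<Rightarrow> 'a) set \<Rightarrow> 'a set \<Rightarrow> 'a" where
  "rep G A x = (SOME g. g \<in> carrier G \<and> orbit A g = x)"

text \<open>pi(g) * pi(h) = [pi(g a(h)) : a in A] (as a multiset of size |A|).\<close>
definition cmult :: "('a, 'b) monoid_scheme \<Rightarrow> ('a \<Rightarrow> 'a) set \<Rightarrow> 'a set \<Rightarrow> 'a set \<Rightarrow> 'a set multiset" where
  "cmult G A x y = image_mset (\<lambda>a. orbit A (rep G A x \<otimes>\<^bsub>G\<^esub> a (rep G A y))) (mset_set A)"

definition cmult_ms :: "('a, 'b) monoid_scheme \<Rightarrow> ('a \<Rightarrow> 'a) set \<Rightarrow> 'a set multiset \<Rightarrow> 'a set \<Rightarrow> 'a set multiset" where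
  "cmult_ms G A M y = sum_mset (image_mset (\<lambda>m. cmult G A m y) M)"

text \<open>Iterated product x * s_1 * ... * s_m (left-bracketed; by associativity this is the product).\<close>
definition cprod :: "('a, 'b) monoid_scheme \<Rightarrow> ('a \<Rightarrow> 'a) set \<Rightarrow> 'a set \<Rightarrow> 'a set list \<Rightarrow> 'a set multiset" where
  "cprod G A x ss = foldl (cmult_ms G A) {#x#} ss"

definition cunit :: "('a, 'b) monoid_scheme \<Rightarrow> ('a \<Rightarrow> 'a) set \<Rightarrow> 'a set" where
  "cunit G A = orbit A \<one>\<^bsub>G\<^esub>"

definition cgenerates :: "('a, 'b) monoid_scheme \<Rightarrow> ('a \<Rightarrow> 'a) set \<Rightarrow> 'a set set \<Rightarrow> bool" where
  "cgenerates G A S \<longleftrightarrow> S \<subseteq> coset_carrier G A \<and>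
     (\<forall>x\<in>coset_carrier G A. \<exists>s ss. s \<in> S \<and> set ss \<subseteq> S \<and> x \<in> set_mset (cprod G A s ss))"

definition cball :: "('a, 'b) monoid_scheme \<Rightarrow> ('a \<Rightarrow> 'a) set \<Rightarrow> 'a set set \<Rightarrow> 'a set \<Rightarrow> nat \<Rightarrow> 'a set set" where
  "cball G A S x r = {y. \<exists>ss. length ss \<le> r \<and> set ss \<subseteq> S \<and> y \<in> set_mset (cprod G A x ss)}"

end

theory Submission
  imports Defs
begin


definition wprod :: "('a,'b) monoid_scheme \<Rightarrow> 'a list \<Rightarrow> 'a" where
  "wprod G xs = foldr (\<lambda>x y. x \<otimes>\<^bsub>G\<^esub> y) xs \<one>\<^bsub>G\<^esub>"

definition W :: "('a,'b) monoid_scheme \<Rightarrow> 'a set \<Rightarrow> nat \<Rightarrow> 'a set" where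
  "W G U L = wprod G ` {xs. set xs \<subseteq> U \<and> length xs \<le> L}"

definition polyb :: "(nat \<Rightarrow> nat) \<Rightarrow> bool" where
  "polyb f \<longleftrightarrow> (\<exists>C k. \<forall>r. f r \<le> C * (Suc r) ^ k)"

lemma wprod_Nil[simp]: "wprod G [] = \<one>\<^bsub>G\<^esub>" by (simp add: wprod_def)
lemma wprod_Cons[simp]: "wprod G (x # xs) = x \<otimes>\<^bsub>G\<^esub> wprod G xs" by (simp add: wprod_def)

lemma finite_W: "finite U \<Longrightarrow> finite (W G U L)"
  unfolding W_def by (intro finite_imageI finite_lists_length_le)

lemma W_mono: "U \<subseteq> U' \<Longrightarrow> L \<le> L' \<Longrightarrow> W G U L \<subseteq> W G U' L'"
  unfolding W_def by auto

lemma W_one: "\<one>\<^bsub>G\<^esub> \<in> W G U L"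
  unfolding W_def by (auto intro!: image_eqI[where x="[]"])

lemma W_memI: "set xs \<subseteq> U \<Longrightarrow> length xs \<le> L \<Longrightarrow> wprod G xs \<in> W G U L"
  unfolding W_def by auto

lemma W_memE: "y \<in> W G U L \<Longrightarrow> (\<And>xs. set xs \<subseteq> U \<Longrightarrow> length xs \<le> L \<Longrightarrow> y = wprod G xs \<Longrightarrow> P) \<Longrightarrow> P"
  unfolding W_def by auto

context monoid begin

lemma wprod_append: "set xs \<subseteq> carrier G \<Longrightarrow> set ys \<subseteq> carrier G \<Longrightarrow>
   wprod G (xs @ ys) = wprod G xs \<otimes> wprod G ys"
proof (induction xs)
  case Nil
  have "wprod G ys \<in> carrier G" using Nil(2) by (induction ys) auto
  then show ?case by simp
next
  case (Cons a xs)
  have "wprod G xs \<in> carrier G" using Cons(2) by (induction xs) auto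
  moreover have "wprod G ys \<in> carrier G" using Cons(3) by (induction ys) auto
  ultimately show ?case using Cons by (simp add: m_assoc)
qed

lemma wprod_closed: "set xs \<subseteq> carrier G \<Longrightarrow> wprod G xs \<in> carrier G"
  by (induction xs) auto

lemma W_carrier: "U \<subseteq> carrier G \<Longrightarrow> W G U L \<subseteq> carrier G"
  unfolding W_def using wprod_closed by auto

lemma W_mult: "U \<subseteq> carrier G \<Longrightarrow> x \<in> W G U a \<Longrightarrow> y \<in> W G U b \<Longrightarrow> x \<otimes> y \<in> W G U (a + b)"
proof -
  assume U: "U \<subseteq> carrier G" and x: "x \<in> W G U a" and y: "y \<in> W G U b"
  obtain xs where xs: "set xs \<subseteq> U" "length xs \<le> a" "x = wprod G xs" using x by (auto elim: W_memE)
  obtain ys where ys: "set ys \<subseteq> U" "length ys \<le> b" "y = wprod G ys" using y by (auto elim: W_memE)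
  have "x \<otimes> y = wprod G (xs @ ys)" using xs ys U by (simp add: wprod_append)
  then show ?thesis using xs ys by (auto intro!: W_memI)
qed

lemma W_single: "U \<subseteq> carrier G \<Longrightarrow> u \<in> U \<Longrightarrow> 1 \<le> L \<Longrightarrow> u \<in> W G U L"
  using W_memI[of "[u]" U L G] by auto

lemma W_prod_list: "U \<subseteq> carrier G \<Longrightarrow> set ys \<subseteq> W G U L \<Longrightarrow> wprod G ys \<in> W G U (length ys * L)"
proof (induction ys)
  case Nil then show ?case by (simp add: W_one)
next
  case (Cons a ys)
  then show ?case using W_mult[of U a L "wprod G ys" "length ys * L"] by auto
qed

lemma W_pow: "U \<subseteq> carrier G \<Longrightarrow> v \<in> W G U L \<Longrightarrow> v [^] (e::nat) \<in> W G U (e * L)"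
proof (induction e)
  case 0 then show ?case by (simp add: W_one)
next
  case (Suc e)
  have "v \<in> carrier G" using Suc W_carrier by auto
  then have "v [^] Suc e = v [^] e \<otimes> v" by simp
  then show ?case using W_mult[OF Suc(2) Suc.IH[OF Suc(2,3)] Suc(3)] by (simp add: add.commute)
qed

end

context group begin

lemma W_inv: "U \<subseteq> carrier G \<Longrightarrow> m_inv G ` U \<subseteq> U \<Longrightarrow> x \<in> W G U L \<Longrightarrow> inv x \<in> W G U L"
proof (erule W_memE)
  fix xs assume xs: "set xs \<subseteq> U" "length xs \<le> L" "U \<subseteq> carrier G" "m_inv G ` U \<subseteq> U" and x: "x = wprod G xs"
  have "inv (wprod G xs) = wprod G (rev (map (m_inv G) xs))" using xs(1,3)
  proof (induction xs)
    case Nil then show ?case by simp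
  next
    case (Cons a xs)
    have c: "set (rev (map (m_inv G) xs)) \<subseteq> carrier G" using Cons by auto
    have "inv (wprod G (a # xs)) = inv (wprod G xs) \<otimes> inv a"
    proof -
      have "a \<in> carrier G" "wprod G xs \<in> carrier G" using Cons wprod_closed[of xs] by auto
      then show ?thesis by (simp add: inv_mult_group)
    qed
    also have "\<dots> = wprod G (rev (map (m_inv G) (a # xs)))"
      using Cons c wprod_append[of "rev (map (m_inv G) xs)" "[inv a]"] wprod_closed[OF c] by auto
    finally show ?case .
  qed
  moreover have "set (rev (map (m_inv G) xs)) \<subseteq> U" using xs by auto
  ultimately show "inv x \<in> W G U L" using x xs W_memI[of "rev (map (m_inv G) xs)" U L G] by auto
qed

end


lemma polyb_le: "polyb f \<Longrightarrow> (\<And>r. g r \<le> f r) \<Longrightarrow> polyb g"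
  unfolding polyb_def by (meson le_trans)

lemma polyb_const: "polyb (\<lambda>_. c)"
  unfolding polyb_def by (rule exI[of _ c], rule exI[of _ 0]) auto

lemma polyb_id: "polyb (\<lambda>r. r)"
  unfolding polyb_def by (rule exI[of _ 1], rule exI[of _ 1]) auto

lemma pow_Suc_mono: "a \<le> b \<Longrightarrow> (Suc r) ^ a \<le> (Suc r) ^ b"
  by (simp add: power_increasing)

lemma polyb_add: "polyb f \<Longrightarrow> polyb g \<Longrightarrow> polyb (\<lambda>r. f r + g r)"
  unfolding polyb_def
proof (elim exE)
  fix C1 k1 C2 k2 assume f: "\<forall>r. f r \<le> C1 * Suc r ^ k1" and g: "\<forall>r. g r \<le> C2 * Suc r ^ k2"
  have "\<forall>r. f r + g r \<le> (C1 + C2) * Suc r ^ (k1 + k2)"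
  proof
    fix r
    have "f r \<le> C1 * Suc r ^ (k1 + k2)" using f pow_Suc_mono[of k1 "k1+k2" r]
      by (meson le_add1 le_trans mult_le_mono2)
    moreover have "g r \<le> C2 * Suc r ^ (k1 + k2)" using g pow_Suc_mono[of k2 "k1+k2" r]
      by (meson le_add2 le_trans mult_le_mono2)
    ultimately show "f r + g r \<le> (C1 + C2) * Suc r ^ (k1 + k2)" by (simp add: add_mult_distrib)
  qed
  then show "\<exists>C k. \<forall>r. f r + g r \<le> C * Suc r ^ k" by blast
qed

lemma polyb_mult: "polyb f \<Longrightarrow> polyb g \<Longrightarrow> polyb (\<lambda>r. f r * g r)"
  unfolding polyb_def
proof (elim exE)
  fix C1 k1 C2 k2 assume f: "\<forall>r. f r \<le> C1 * Suc r ^ k1" and g: "\<forall>r. g r \<le> C2 * Suc r ^ k2"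
  have "\<forall>r. f r * g r \<le> (C1 * C2) * Suc r ^ (k1 + k2)"
  proof
    fix r
    have "f r * g r \<le> (C1 * Suc r ^ k1) * (C2 * Suc r ^ k2)" using f g mult_le_mono by blast
    also have "\<dots> = (C1 * C2) * Suc r ^ (k1 + k2)" by (simp add: power_add)
    finally show "f r * g r \<le> (C1 * C2) * Suc r ^ (k1 + k2)" .
  qed
  then show "\<exists>C k. \<forall>r. f r * g r \<le> C * Suc r ^ k" by blast
qed

lemma polyb_comp: "polyb f \<Longrightarrow> polyb g \<Longrightarrow> polyb (\<lambda>r. f (g r))"
  unfolding polyb_def
proof (elim exE)
  fix C1 k1 C2 k2 assume f: "\<forall>r. f r \<le> C1 * Suc r ^ k1" and g: "\<forall>r. g r \<le> C2 * Suc r ^ k2"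
  have "\<forall>r. f (g r) \<le> (C1 * Suc C2 ^ k1) * Suc r ^ (k2 * k1)"
  proof
    fix r
    have "Suc (g r) \<le> Suc C2 * Suc r ^ k2"
    proof -
      have a: "1 \<le> Suc r ^ k2" by simp
      have b: "g r \<le> C2 * Suc r ^ k2" using g by blast
      have "Suc C2 * Suc r ^ k2 = Suc r ^ k2 + C2 * Suc r ^ k2" by simp
      then show ?thesis using a b by linarith
    qed
    then have "Suc (g r) ^ k1 \<le> (Suc C2 * Suc r ^ k2) ^ k1" by (rule power_mono) simp
    also have "\<dots> = Suc C2 ^ k1 * Suc r ^ (k2 * k1)" by (simp only: power_mult_distrib power_mult)
    finally have "Suc (g r) ^ k1 \<le> Suc C2 ^ k1 * Suc r ^ (k2 * k1)" .
    then have "C1 * Suc (g r) ^ k1 \<le> C1 * (Suc C2 ^ k1 * Suc r ^ (k2 * k1))" by (rule mult_le_mono2)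
    then show "f (g r) \<le> (C1 * Suc C2 ^ k1) * Suc r ^ (k2 * k1)" using f[rule_format, of "g r"]
      unfolding mult.assoc by linarith
  qed
  then show "\<exists>C k. \<forall>r. f (g r) \<le> C * Suc r ^ k" by blast
qed

definition comm :: "('a,'b) monoid_scheme \<Rightarrow> 'a \<Rightarrow> 'a \<Rightarrow> 'a" where
  "comm G u t = inv\<^bsub>G\<^esub> u \<otimes>\<^bsub>G\<^esub> inv\<^bsub>G\<^esub> t \<otimes>\<^bsub>G\<^esub> u \<otimes>\<^bsub>G\<^esub> t"

definition conjg :: "('a,'b) monoid_scheme \<Rightarrow> 'a \<Rightarrow> 'a \<Rightarrow> 'a" where
  "conjg G g x = inv\<^bsub>G\<^esub> g \<otimes>\<^bsub>G\<^esub> x \<otimes>\<^bsub>G\<^esub> g"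

context group begin

lemma cancel1[simp]: "g \<in> carrier G \<Longrightarrow> x \<in> carrier G \<Longrightarrow> g \<otimes> (inv g \<otimes> x) = x"
  by (simp add: m_assoc[symmetric] r_inv)
lemma cancel2[simp]: "g \<in> carrier G \<Longrightarrow> x \<in> carrier G \<Longrightarrow> inv g \<otimes> (g \<otimes> x) = x"
  by (simp add: m_assoc[symmetric] l_inv)

lemma comm_closed[simp]: "u \<in> carrier G \<Longrightarrow> t \<in> carrier G \<Longrightarrow> comm G u t \<in> carrier G"
  by (simp add: comm_def)

lemma conjg_closed[simp]: "g \<in> carrier G \<Longrightarrow> x \<in> carrier G \<Longrightarrow> conjg G g x \<in> carrier G"
  by (simp add: conjg_def)

lemma conjg_comm: "g \<in> carrier G \<Longrightarrow> u \<in> carrier G \<Longrightarrow> conjg G g u = u \<otimes> comm G u g"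
  by (simp add: conjg_def comm_def m_assoc[symmetric] r_inv)

lemma comm_mult: "u \<in> carrier G \<Longrightarrow> t \<in> carrier G \<Longrightarrow> g \<in> carrier G \<Longrightarrow>
   comm G u (t \<otimes> g) = comm G u g \<otimes> conjg G g (comm G u t)"
  by (simp add: conjg_def comm_def m_assoc inv_mult_group r_inv_ex)

lemma conjg_mult: "g \<in> carrier G \<Longrightarrow> x \<in> carrier G \<Longrightarrow> y \<in> carrier G \<Longrightarrow>
   conjg G g (x \<otimes> y) = conjg G g x \<otimes> conjg G g y"
  by (simp add: conjg_def m_assoc r_inv_ex)

lemma conjg_one_left: "x \<in> carrier G \<Longrightarrow> conjg G \<one> x = x"
  by (simp add: conjg_def)

lemma conjg_one_right: "g \<in> carrier G \<Longrightarrow> conjg G g \<one> = \<one>"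
  by (simp add: conjg_def)

lemma swap_conj: "g \<in> carrier G \<Longrightarrow> x \<in> carrier G \<Longrightarrow> x \<otimes> g = g \<otimes> conjg G g x"
  by (simp add: conjg_def m_assoc[symmetric] r_inv)

end


fun Fam :: "('a,'b) monoid_scheme \<Rightarrow> 'a set \<Rightarrow> nat \<Rightarrow> 'a set" where
  "Fam G T 0 = T \<union> m_inv G ` T"
| "Fam G T (Suc j) = (\<lambda>p. comm G (fst p) (snd p)) ` ((Fam G T j \<union> m_inv G ` Fam G T j) \<times> Fam G T 0)"

declare Fam.simps(1)[simp del]
lemmas Fam0 = Fam.simps(1)

definition Vs :: "('a,'b) monoid_scheme \<Rightarrow> 'a set \<Rightarrow> nat \<Rightarrow> 'a set" where
  "Vs G T j = Fam G T j \<union> m_inv G ` Fam G T j"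

definition Us :: "('a,'b) monoid_scheme \<Rightarrow> 'a set \<Rightarrow> nat \<Rightarrow> nat \<Rightarrow> 'a set" where
  "Us G T c i = (\<Union>j\<in>{i..<c}. Vs G T j)"

context group begin

lemma lc_subgroup: "subgroup (lower_central G j) G"
proof (induction j)
  case 0 then show ?case by (simp add: subgroup_self)
next
  case (Suc j)
  have "{x \<otimes> y \<otimes> inv x \<otimes> inv y | x y. x \<in> lower_central G j \<and> y \<in> carrier G} \<subseteq> carrier G"
    using Suc subgroup.subset by fastforce
  then show ?case by (simp add: commutator_subgroup_def generate_is_subgroup)
qed

lemma Fam_carrier: "T \<subseteq> carrier G \<Longrightarrow> Fam G T j \<subseteq> carrier G"
proof (induction j)
  case 0 then show ?case by (auto simp: Fam0)
next
  case (Suc j)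
  have "Fam G T j \<union> m_inv G ` Fam G T j \<subseteq> carrier G" using Suc by auto
  moreover have "Fam G T 0 \<subseteq> carrier G" using Suc.prems by (auto simp: Fam0)
  ultimately show ?case by (auto intro!: comm_closed simp del: Fam.simps(1))
qed

lemma Vs_carrier: "T \<subseteq> carrier G \<Longrightarrow> Vs G T j \<subseteq> carrier G"
  using Fam_carrier[of T j] unfolding Vs_def by (auto simp del: Fam.simps)

lemma Us_carrier: "T \<subseteq> carrier G \<Longrightarrow> Us G T c i \<subseteq> carrier G"
  using Vs_carrier[of T] unfolding Us_def by blast

lemma finite_Fam: "finite T \<Longrightarrow> finite (Fam G T j)"
proof (induction j)
  case 0 then show ?case by (simp add: Fam0)
next
  case (Suc j)
  have "finite (Fam G T 0)" using Suc.prems by (simp add: Fam0)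
  then show ?case using Suc by simp
qed

lemma finite_Vs: "finite T \<Longrightarrow> finite (Vs G T j)"
  using finite_Fam by (auto simp: Vs_def)

lemma finite_Us: "finite T \<Longrightarrow> finite (Us G T c i)"
  using finite_Vs by (auto simp: Us_def)

lemma Fam0_sym: "T \<subseteq> carrier G \<Longrightarrow> m_inv G ` Fam G T 0 \<subseteq> Fam G T 0"
  by (auto simp: Fam0)

lemma Vs0: "T \<subseteq> carrier G \<Longrightarrow> Vs G T 0 = Fam G T 0"
  unfolding Vs_def using Fam0_sym by blast

lemma Us_c: "Us G T c c = {}" by (simp add: Us_def)

lemma Us_split: "i < c \<Longrightarrow> Us G T c i = Vs G T i \<union> Us G T c (Suc i)"
proof -
  assume "i < c"
  then have "{i..<c} = insert i {Suc i..<c}" by auto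
  then show ?thesis by (simp add: Us_def)
qed

lemma Fam_lc: "T \<subseteq> carrier G \<Longrightarrow> Fam G T j \<subseteq> lower_central G j"
proof (induction j)
  case 0 then show ?case by (auto simp: Fam0)
next
  case (Suc j)
  show ?case
  proof
    fix z assume "z \<in> Fam G T (Suc j)"
    then obtain p where p: "p \<in> (Fam G T j \<union> m_inv G ` Fam G T j) \<times> Fam G T 0" "z = comm G (fst p) (snd p)"
      by auto
    obtain u t where ut: "u \<in> Fam G T j \<union> m_inv G ` Fam G T j" "t \<in> Fam G T 0" "z = comm G u t"
      using p by (cases p) auto
    have uj: "u \<in> lower_central G j"
    proof (cases "u \<in> Fam G T j")
      case True then show ?thesis using Suc.IH[OF Suc.prems] by blast
    next
      case False
      then obtain w where "w \<in> Fam G T j" "u = inv w" using ut(1) by blast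
      then show ?thesis using Suc.IH[OF Suc.prems] subgroup.m_inv_closed[OF lc_subgroup[of j]] by blast
    qed
    have uc: "u \<in> carrier G" using uj subgroup.subset[OF lc_subgroup[of j]] by blast
    have tc: "t \<in> carrier G" using ut(2) Fam_carrier[OF Suc.prems, of 0] by blast
    have "inv u \<in> lower_central G j" using uj subgroup.m_inv_closed[OF lc_subgroup[of j]] by blast
    moreover have "z = inv u \<otimes> inv t \<otimes> inv (inv u) \<otimes> inv (inv t)"
      using ut(3) uc tc by (simp add: comm_def)
    moreover have "inv t \<in> carrier G" using tc by simp
    ultimately have "z \<in> {x \<otimes> y \<otimes> inv x \<otimes> inv y | x y. x \<in> lower_central G j \<and> y \<in> carrier G}"
      by blast
    then show "z \<in> lower_central G (Suc j)"
      by (simp add: commutator_subgroup_def generate.incl)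
  qed
qed

lemma Vs_words: "T \<subseteq> carrier G \<Longrightarrow> Vs G T j \<subseteq> W G (Fam G T 0) (4 ^ j)"
proof (induction j)
  case 0
  have "Fam G T 0 \<subseteq> W G (Fam G T 0) 1" using W_single[of "Fam G T 0"] Fam_carrier[OF 0] by auto
  then show ?case using Vs0[OF 0] by simp
next
  case (Suc j)
  let ?F = "Fam G T 0"
  have F0c: "?F \<subseteq> carrier G" using Fam_carrier[OF Suc.prems] by blast
  have sym: "m_inv G ` ?F \<subseteq> ?F" using Fam0_sym[OF Suc.prems] .
  have fam: "Fam G T (Suc j) \<subseteq> W G ?F (4 ^ Suc j)"
  proof
    fix z assume "z \<in> Fam G T (Suc j)"
    then obtain p where p: "p \<in> (Fam G T j \<union> m_inv G ` Fam G T j) \<times> Fam G T 0" "z = comm G (fst p) (snd p)"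
      by auto
    obtain u t where ut: "u \<in> Vs G T j" "t \<in> ?F" "z = comm G u t"
      using p unfolding Vs_def by (cases p) auto
    have u: "u \<in> W G ?F (4 ^ j)" using ut(1) Suc by blast
    have t: "t \<in> W G ?F 1" using W_single[OF F0c ut(2)] by simp
    have iu: "inv u \<in> W G ?F (4 ^ j)" using W_inv[OF F0c sym u] .
    have it: "inv t \<in> W G ?F 1" using W_inv[OF F0c sym t] .
    have "z \<in> W G ?F (4 ^ j + 1 + 4 ^ j + 1)"
      unfolding ut(3) comm_def by (intro W_mult[OF F0c] iu it u t)
    moreover have "4 ^ j + 1 + 4 ^ j + 1 \<le> (4::nat) ^ Suc j"
    proof -
      have "1 \<le> (4::nat) ^ j" by simp
      then show ?thesis by simp
    qed
    ultimately show "z \<in> W G ?F (4 ^ Suc j)" using W_mono[of ?F ?F] by blast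
  qed
  have "m_inv G ` Fam G T (Suc j) \<subseteq> W G ?F (4 ^ Suc j)"
    using fam W_inv[OF F0c sym] by blast
  then show ?case using fam by (simp add: Vs_def)
qed

lemma comm_Vs: assumes T: "T \<subseteq> carrier G" and lc: "lower_central G c = {\<one>}" and i: "i < c"
  and u: "u \<in> Vs G T i" and t: "t \<in> Fam G T 0"
  shows "comm G u t \<in> Us G T c (Suc i) \<union> {\<one>}"
proof -
  have z: "comm G u t \<in> Fam G T (Suc i)" using u t unfolding Vs_def Fam.simps(2)
    by (intro image_eqI[where x="(u,t)"]) auto
  show ?thesis
  proof (cases "Suc i < c")
    case True
    then have "Vs G T (Suc i) \<subseteq> Us G T c (Suc i)" unfolding Us_def by (intro UN_upper) auto
    then have "Fam G T (Suc i) \<subseteq> Us G T c (Suc i)" unfolding Vs_def by blast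
    then show ?thesis using z by blast
  next
    case False
    then have "Suc i = c" using i by simp
    then show ?thesis using z Fam_lc[OF T, of c] lc by auto
  qed
qed

end


context group begin

lemma commbound:
  assumes U': "U' \<subseteq> carrier G" and F: "F \<subseteq> carrier G"
    and hyp: "\<forall>g\<in>W G F r. \<forall>x\<in>U'. conjg G g x \<in> W G U' m"
    and u: "u \<in> carrier G" and ct: "\<forall>t\<in>F. comm G u t \<in> U' \<union> {\<one>}"
  shows "set xs \<subseteq> F \<Longrightarrow> length xs \<le> r \<Longrightarrow> comm G u (wprod G xs) \<in> W G U' (length xs * m)"
proof (induction xs)
  case Nil
  have "comm G u \<one> = \<one>" using u by (simp add: comm_def l_inv)
  then show ?case by (simp add: W_one)
next
  case (Cons t xs)
  have tc: "t \<in> carrier G" using Cons F by auto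
  have xsc: "set xs \<subseteq> carrier G" using Cons F by auto
  have wc: "wprod G xs \<in> carrier G" using wprod_closed[OF xsc] .
  have wW: "wprod G xs \<in> W G F r" using Cons by (intro W_memI) auto
  have c1: "comm G u (wprod G xs) \<in> W G U' (length xs * m)" using Cons by auto
  have c2: "conjg G (wprod G xs) (comm G u t) \<in> W G U' m"
  proof (cases "comm G u t = \<one>")
    case True then show ?thesis using conjg_one_right[OF wc] W_one by simp
  next
    case False
    then have "comm G u t \<in> U'" using ct Cons by auto
    then show ?thesis using hyp wW by blast
  qed
  have "comm G u (wprod G (t # xs)) = comm G u (wprod G xs) \<otimes> conjg G (wprod G xs) (comm G u t)"
    using comm_mult[OF u tc wc] by simp
  also have "\<dots> \<in> W G U' (length xs * m + m)" by (rule W_mult[OF U' c1 c2])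
  finally show ?case by (simp add: add.commute)
qed

end

locale nilp = group +
  fixes T :: "'a set" and c :: nat
  assumes T_carrier: "T \<subseteq> carrier G" and T_fin: "finite T"
    and lc: "lower_central G c = {\<one>}"
begin

abbreviation "F0 \<equiv> Fam G T 0"

lemma F0_carrier: "F0 \<subseteq> carrier G" using Fam_carrier[OF T_carrier] .

lemma conj_bound: "i \<le> c \<Longrightarrow> \<exists>f. polyb f \<and>
   (\<forall>r. \<forall>g\<in>W G F0 r. \<forall>x\<in>Us G T c i. conjg G g x \<in> W G (Us G T c i) (f r))"
proof (induction rule: inc_induct)
  case base
  then show ?case using polyb_const[of 0] by (auto simp: Us_c)
next
  case (step n)
  then obtain f where f: "polyb f" "\<forall>r. \<forall>g\<in>W G F0 r. \<forall>x\<in>Us G T c (Suc n). conjg G g x \<in> W G (Us G T c (Suc n)) (f r)"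
    by blast
  let ?U' = "Us G T c (Suc n)"
  let ?U = "Us G T c n"
  have Usplit: "?U = Vs G T n \<union> ?U'" using Us_split[OF step(2)] .
  have U'c: "?U' \<subseteq> carrier G" using Us_carrier[OF T_carrier] .
  have Uc: "?U \<subseteq> carrier G" using Us_carrier[OF T_carrier] .
  define f' where "f' = (\<lambda>r. f r + r * f r + 1)"
  have pf': "polyb f'" unfolding f'_def
    by (intro polyb_add polyb_mult f(1) polyb_id polyb_const)
  have "\<forall>r. \<forall>g\<in>W G F0 r. \<forall>x\<in>?U. conjg G g x \<in> W G ?U (f' r)"
  proof (intro allI ballI)
    fix r g x assume g: "g \<in> W G F0 r" and x: "x \<in> ?U"
    have gc: "g \<in> carrier G" using g W_carrier[OF F0_carrier] by blast
    show "conjg G g x \<in> W G ?U (f' r)"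
    proof (cases "x \<in> ?U'")
      case True
      then have "conjg G g x \<in> W G ?U' (f r)" using f(2) g by blast
      moreover have "W G ?U' (f r) \<subseteq> W G ?U (f' r)" using Usplit by (intro W_mono) (auto simp: f'_def)
      ultimately show ?thesis by blast
    next
      case False
      then have xV: "x \<in> Vs G T n" using x Usplit by blast
      have xc: "x \<in> carrier G" using xV Vs_carrier[OF T_carrier] by blast
      obtain xs where xs: "set xs \<subseteq> F0" "length xs \<le> r" "g = wprod G xs" using g by (auto elim: W_memE)
      have ct: "\<forall>t\<in>F0. comm G x t \<in> ?U' \<union> {\<one>}" using comm_Vs[OF T_carrier lc step(2) xV] by blast
      have "comm G x (wprod G xs) \<in> W G ?U' (length xs * f r)"
        using commbound[OF U'c F0_carrier _ xc ct xs(1,2)] f(2) by blast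
      moreover have "W G ?U' (length xs * f r) \<subseteq> W G ?U (r * f r)" using Usplit xs(2)
        by (intro W_mono) auto
      ultimately have cm: "comm G x g \<in> W G ?U (r * f r)" using xs(3) by blast
      have x1: "x \<in> W G ?U 1" using W_single[OF Uc x] by simp
      have "conjg G g x = x \<otimes> comm G x g" using conjg_comm[OF gc xc] .
      also have "\<dots> \<in> W G ?U (1 + r * f r)" by (rule W_mult[OF Uc x1 cm])
      finally show ?thesis using W_mono[of ?U ?U "1 + r * f r" "f' r"] by (auto simp: f'_def)
    qed
  qed
  then show ?case using pf' by blast
qed

end


context nilp begin

lemma coll:
  assumes n: "n < c"
    and fc: "polyb fc" "\<forall>r. \<forall>g\<in>W G F0 r. \<forall>x\<in>Us G T c (Suc n). conjg G g x \<in> W G (Us G T c (Suc n)) (fc r)"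
    and fn: "polyb fn" "\<forall>L. card (W G (Us G T c (Suc n)) L) \<le> fn L"
  shows "finite S \<Longrightarrow> S \<subseteq> Vs G T n \<Longrightarrow> \<exists>f. polyb f \<and> (\<forall>L. card (W G (S \<union> Us G T c (Suc n)) L) \<le> f L)"
proof (induction S rule: finite_induct)
  case empty
  then show ?case using fn by auto
next
  case (insert v S)
  let ?U' = "Us G T c (Suc n)"
  let ?S' = "S \<union> ?U'"
  obtain fS where fS: "polyb fS" "\<forall>L. card (W G ?S' L) \<le> fS L" using insert by auto
  have U'c: "?U' \<subseteq> carrier G" using Us_carrier[OF T_carrier] .
  have Vc: "Vs G T n \<subseteq> carrier G" using Vs_carrier[OF T_carrier] .
  have S'c: "?S' \<subseteq> carrier G" using insert(4) Vc U'c by blast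
  have vV: "v \<in> Vs G T n" using insert by auto
  have vc: "v \<in> carrier G" using vV Vc by blast
  define lam where "lam = (4::nat) ^ n"
  have vW: "v \<in> W G F0 lam" using Vs_words[OF T_carrier] vV unfolding lam_def by blast
  define B where "B = (\<lambda>L. 1 + (L * lam) * fc (L * lam) + fc (L * lam))"
  have pB: "polyb B" unfolding B_def
    by (intro polyb_add polyb_mult polyb_const polyb_id polyb_comp[OF fc(1)])
  have conjstep: "conjg G (v [^] e) x \<in> W G ?S' (B L)" if e: "e \<le> L" and x: "x \<in> ?S'" for e L x
  proof -
    have ve: "v [^] e \<in> W G F0 (L * lam)"
      using W_pow[OF F0_carrier vW, of e] W_mono[of F0 F0 "e * lam" "L * lam"] e by auto
    have vec: "v [^] e \<in> carrier G" using vc by simp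
    show ?thesis
    proof (cases "x \<in> ?U'")
      case True
      then have "conjg G (v [^] e) x \<in> W G ?U' (fc (L * lam))" using fc(2) ve by blast
      moreover have "W G ?U' (fc (L * lam)) \<subseteq> W G ?S' (B L)" by (intro W_mono) (auto simp: B_def)
      ultimately show ?thesis by blast
    next
      case False
      then have xS: "x \<in> S" using x by blast
      then have xV: "x \<in> Vs G T n" using insert(4) by blast
      have xc: "x \<in> carrier G" using xV Vc by blast
      obtain ys where ys: "set ys \<subseteq> F0" "length ys \<le> L * lam" "v [^] e = wprod G ys"
        using ve by (auto elim: W_memE)
      have ct: "\<forall>t\<in>F0. comm G x t \<in> ?U' \<union> {\<one>}" using comm_Vs[OF T_carrier lc n xV] by blast
      have "comm G x (wprod G ys) \<in> W G ?U' (length ys * fc (L * lam))"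
        using commbound[OF U'c F0_carrier _ xc ct ys(1,2)] fc(2) by blast
      moreover have "W G ?U' (length ys * fc (L * lam)) \<subseteq> W G ?S' ((L * lam) * fc (L * lam))"
        using ys(2) by (intro W_mono) auto
      ultimately have cm': "comm G x (wprod G ys) \<in> W G ?S' ((L * lam) * fc (L * lam))" by blast
      have cm: "comm G x (v [^] e) \<in> W G ?S' ((L * lam) * fc (L * lam))" using cm' ys(3) by simp
      have x1: "x \<in> W G ?S' 1" using W_single[OF S'c x] by simp
      have "conjg G (v [^] e) x = x \<otimes> comm G x (v [^] e)" using conjg_comm[OF vec xc] .
      also have "\<dots> \<in> W G ?S' (1 + (L * lam) * fc (L * lam))" by (rule W_mult[OF S'c x1 cm])
      finally show ?thesis using W_mono[of ?S' ?S' "1 + (L * lam) * fc (L * lam)" "B L"] by (auto simp: B_def)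
    qed
  qed
  have pull: "set xs \<subseteq> insert v ?S' \<Longrightarrow> length xs \<le> L \<Longrightarrow>
      \<exists>e w. e \<le> length xs \<and> w \<in> W G ?S' (length xs * B L) \<and> wprod G xs = v [^] e \<otimes> w" for xs L
  proof (induction xs)
    case Nil
    then show ?case using W_one by (auto intro!: exI[of _ 0] exI[of _ \<one>])
  next
    case (Cons x xs)
    then obtain e w where ew: "e \<le> length xs" "w \<in> W G ?S' (length xs * B L)" "wprod G xs = v [^] e \<otimes> w"
      by auto
    have wc: "w \<in> carrier G" using ew(2) W_carrier[OF S'c] by blast
    have vec: "v [^] e \<in> carrier G" using vc by simp
    show ?case
    proof (cases "x = v")
      case True
      have p2: "v [^] Suc e = v \<otimes> v [^] e" by (rule nat_pow_Suc2[OF vc])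
      have "wprod G (x # xs) = v \<otimes> (v [^] e \<otimes> w)" using True ew(3) by simp
      also have "\<dots> = (v \<otimes> v [^] e) \<otimes> w" using vc vec wc by (rule m_assoc[symmetric])
      also have "\<dots> = v [^] Suc e \<otimes> w" by (simp only: p2)
      finally have eq: "wprod G (x # xs) = v [^] Suc e \<otimes> w" .
      have le: "length xs * B L \<le> length (x # xs) * B L" by simp
      have w2: "w \<in> W G ?S' (length (x # xs) * B L)" by (rule subsetD[OF W_mono[OF order_refl le] ew(2)])
      have e2: "Suc e \<le> length (x # xs)" using ew(1) by simp
      show ?thesis using eq w2 e2 by blast
    next
      case False
      then have xS: "x \<in> ?S'" using Cons.prems(1) by auto
      have xc: "x \<in> carrier G" using xS S'c by blast
      have eL: "e \<le> L" using ew(1) Cons.prems(2) by simp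
      have cj: "conjg G (v [^] e) x \<in> W G ?S' (B L)" using conjstep[OF eL xS] .
      have cjc: "conjg G (v [^] e) x \<in> carrier G" using vec xc by simp
      have "wprod G (x # xs) = x \<otimes> (v [^] e \<otimes> w)" using ew(3) by simp
      also have "\<dots> = (x \<otimes> v [^] e) \<otimes> w" using xc vec wc by (rule m_assoc[symmetric])
      also have "\<dots> = (v [^] e \<otimes> conjg G (v [^] e) x) \<otimes> w" by (simp only: swap_conj[OF vec xc])
      also have "\<dots> = v [^] e \<otimes> (conjg G (v [^] e) x \<otimes> w)" using vec cjc wc by (rule m_assoc)
      finally have eq: "wprod G (x # xs) = v [^] e \<otimes> (conjg G (v [^] e) x \<otimes> w)" .
      have eqB: "length (x # xs) * B L = B L + length xs * B L" by simp
      have w2: "conjg G (v [^] e) x \<otimes> w \<in> W G ?S' (length (x # xs) * B L)"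
        unfolding eqB by (rule W_mult[OF S'c cj ew(2)])
      have e2: "e \<le> length (x # xs)" using ew(1) by simp
      show ?thesis using eq w2 e2 by blast
    qed
  qed
  define f where "f = (\<lambda>L. (L + 1) * fS (L * B L))"
  have pf: "polyb f" unfolding f_def
    by (intro polyb_mult polyb_add polyb_id polyb_const polyb_comp[OF fS(1)] pB)
  have "card (W G (insert v S \<union> ?U') L) \<le> f L" for L
  proof -
    let ?P = "{..L} \<times> W G ?S' (L * B L)"
    have sub: "W G (insert v S \<union> ?U') L \<subseteq> (\<lambda>p. v [^] fst p \<otimes> snd p) ` ?P"
    proof
      fix y assume "y \<in> W G (insert v S \<union> ?U') L"
      then obtain xs where xs: "set xs \<subseteq> insert v S \<union> ?U'" "length xs \<le> L" "y = wprod G xs"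
        by (auto elim: W_memE)
      have xs1: "set xs \<subseteq> insert v ?S'" using xs(1) by blast
      obtain e w where ew: "e \<le> length xs" "w \<in> W G ?S' (length xs * B L)" "wprod G xs = v [^] e \<otimes> w"
        using pull[OF xs1 xs(2)] by blast
      have le: "length xs * B L \<le> L * B L" using xs(2) by (rule mult_le_mono1)
      have "w \<in> W G ?S' (L * B L)" by (rule subsetD[OF W_mono[OF order_refl le] ew(2)])
      moreover have "e \<in> {..L}" using ew(1) xs(2) by simp
      ultimately have "(e, w) \<in> ?P" by blast
      moreover have "y = v [^] fst (e, w) \<otimes> snd (e, w)" using xs(3) ew(3) by simp
      ultimately show "y \<in> (\<lambda>p. v [^] fst p \<otimes> snd p) ` ?P" by blast
    qed
    have finS': "finite ?S'" using insert(1) finite_Us[OF T_fin] by blast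
    have finP: "finite ?P" using finite_W[OF finS'] by blast
    have "card (W G (insert v S \<union> ?U') L) \<le> card ((\<lambda>p. v [^] fst p \<otimes> snd p) ` ?P)"
      using sub finP by (intro card_mono) auto
    also have "\<dots> \<le> card ?P" using finP card_image_le by blast
    also have "\<dots> = (L + 1) * card (W G ?S' (L * B L))" by (simp add: card_cartesian_product)
    also have "\<dots> \<le> (L + 1) * fS (L * B L)" using fS(2) by (intro mult_le_mono2) blast
    finally show ?thesis unfolding f_def .
  qed
  then show ?case using pf by blast
qed

lemma count_bound: "i \<le> c \<Longrightarrow> \<exists>f. polyb f \<and> (\<forall>L. card (W G (Us G T c i) L) \<le> f L)"
proof (induction rule: inc_induct)
  case base
  have "W G {} L \<subseteq> {\<one>}" for L by (auto simp: W_def)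
  then have "card (W G (Us G T c c) L) \<le> 1" for L
    using card_mono[of "{\<one>}" "W G {} L"] by (simp add: Us_c)
  then show ?case using polyb_const[of 1] by blast
next
  case (step n)
  obtain fc where fc: "polyb fc" "\<forall>r. \<forall>g\<in>W G F0 r. \<forall>x\<in>Us G T c (Suc n). conjg G g x \<in> W G (Us G T c (Suc n)) (fc r)"
    using conj_bound[of "Suc n"] step(2) by auto
  obtain fn where fn: "polyb fn" "\<forall>L. card (W G (Us G T c (Suc n)) L) \<le> fn L" using step(3) by blast
  have "\<exists>f. polyb f \<and> (\<forall>L. card (W G (Vs G T n \<union> Us G T c (Suc n)) L) \<le> f L)"
    using coll[OF step(2) fc fn finite_Vs[OF T_fin]] by blast
  then show ?case using Us_split[OF step(2)] by simp
qed

theorem nilp_growth: "\<exists>f. polyb f \<and> (\<forall>L. card (W G T L) \<le> f L)"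
proof (cases "c = 0")
  case True
  then have car: "carrier G = {\<one>}" using lc by simp
  have "card (W G T L) \<le> 1" for L
  proof -
    have "W G T L \<subseteq> {\<one>}" using W_carrier[OF T_carrier] car by blast
    then show ?thesis using card_mono[of "{\<one>}"] by auto
  qed
  then show ?thesis using polyb_const[of 1] by blast
next
  case False
  obtain f where f: "polyb f" "\<forall>L. card (W G (Us G T c 0) L) \<le> f L" using count_bound[of 0] by auto
  have "T \<subseteq> Fam G T 0" by (simp add: Fam0)
  moreover have "Fam G T 0 \<subseteq> Us G T c 0" using False unfolding Us_def Vs_def
    by (intro subset_trans[OF _ UN_upper[of 0]]) auto
  ultimately have TU: "T \<subseteq> Us G T c 0" by blast
  have "card (W G T L) \<le> f L" for L
  proof -
    have "card (W G T L) \<le> card (W G (Us G T c 0) L)"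
      by (rule card_mono[OF finite_W[OF finite_Us[OF T_fin]] W_mono[OF TU order_refl]])
    then show ?thesis using f(2) le_trans by blast
  qed
  then show ?thesis using f(1) by blast
qed

end


lemma W_sub_eq: "W (G\<lparr>carrier := H\<rparr>) U L = W G U L"
proof -
  have "wprod (G\<lparr>carrier := H\<rparr>) xs = wprod G xs" for xs by (induction xs) auto
  then show ?thesis unfolding W_def by simp
qed

context group begin

lemma fi_growth:
  assumes H: "subgroup H G" and fin: "finite (rcosets H)"
    and nil: "nilpotent_group (G\<lparr>carrier := H\<rparr>)"
    and T: "T \<subseteq> carrier G" "finite T"
  shows "\<exists>f. polyb f \<and> (\<forall>L. card (W G T L) \<le> f L)"
proof -
  have Hc: "H \<subseteq> carrier G" using H subgroup.subset by blast
  define R where "R = insert \<one> ((\<lambda>C. inv (SOME x. x \<in> C)) ` (rcosets H))"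
  have finR: "finite R" unfolding R_def using fin by simp
  have decomp: "\<exists>r\<in>R. \<exists>h\<in>H. g = r \<otimes> h" if g: "g \<in> carrier G" for g
  proof -
    let ?C = "H #> inv g"
    have C: "?C \<in> rcosets H" using rcosetsI[OF Hc] g by simp
    have "\<one> \<otimes> inv g \<in> ?C" using rcosI[OF subgroup.one_closed[OF H] Hc] g by simp
    then have "\<exists>x. x \<in> ?C" by blast
    then have xC: "(SOME x. x \<in> ?C) \<in> ?C" by (rule someI_ex)
    then obtain h where h: "h \<in> H" "(SOME x. x \<in> ?C) = h \<otimes> inv g" unfolding r_coset_def by blast
    have hc: "h \<in> carrier G" using h Hc by blast
    have "inv (SOME x. x \<in> ?C) \<otimes> h = g"
      using h(2) hc g by (simp add: inv_mult_group m_assoc)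
    moreover have "inv (SOME x. x \<in> ?C) \<in> R" unfolding R_def using C by blast
    ultimately show ?thesis using h(1) by metis
  qed
  have Rc: "R \<subseteq> carrier G"
  proof
    fix r assume "r \<in> R"
    then consider "r = \<one>" | C where "C \<in> rcosets H" "r = inv (SOME x. x \<in> C)" unfolding R_def by blast
    then show "r \<in> carrier G"
    proof cases
      case 1 then show ?thesis by simp
    next
      case 2
      then obtain a where a: "a \<in> carrier G" "C = H #> a" unfolding RCOSETS_def by blast
      have "\<one> \<otimes> a \<in> C" using rcosI[OF subgroup.one_closed[OF H] Hc] a by simp
      then have "(SOME x. x \<in> C) \<in> C" by (rule someI)
      then have "(SOME x. x \<in> C) \<in> carrier G" using r_coset_subset_G[OF Hc a(1)] a(2) by blast
      then show ?thesis using 2 by simp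
    qed
  qed
  define T' where "T' = ((\<lambda>p. inv (snd (snd p)) \<otimes> fst p \<otimes> fst (snd p)) ` (T \<times> R \<times> R)) \<inter> H"
  have finT': "finite T'" unfolding T'_def using T(2) finR by blast
  have T'H: "T' \<subseteq> H" unfolding T'_def by blast
  have T'c: "T' \<subseteq> carrier G" using T'H Hc by blast
  have claim: "set xs \<subseteq> T \<Longrightarrow> \<exists>r\<in>R. \<exists>h\<in>W G T' (length xs). wprod G xs = r \<otimes> h" for xs
  proof (induction xs)
    case Nil
    then show ?case using W_one[of G T' 0] unfolding R_def by force
  next
    case (Cons t xs)
    then obtain r h where rh: "r \<in> R" "h \<in> W G T' (length xs)" "wprod G xs = r \<otimes> h" by auto
    have tc: "t \<in> carrier G" using Cons.prems T(1) by auto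
    have rc: "r \<in> carrier G" using rh(1) Rc by blast
    have hc: "h \<in> carrier G" using rh(2) W_carrier[OF T'c] by blast
    obtain r' h' where r'h': "r' \<in> R" "h' \<in> H" "t \<otimes> r = r' \<otimes> h'" using decomp[of "t \<otimes> r"] tc rc by blast
    have r'c: "r' \<in> carrier G" using r'h'(1) Rc by blast
    have h'c: "h' \<in> carrier G" using r'h'(2) Hc by blast
    have "h' = inv r' \<otimes> t \<otimes> r"
    proof -
      have "inv r' \<otimes> (t \<otimes> r) = inv r' \<otimes> (r' \<otimes> h')" using r'h'(3) by simp
      then show ?thesis using r'c h'c tc rc by (simp add: m_assoc)
    qed
    then have "h' \<in> T'" unfolding T'_def using r'h'(2) Cons.prems rh(1) r'h'(1)
      by (intro IntI image_eqI[where x="(t, r, r')"]) auto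
    then have h'W: "h' \<in> W G T' 1" using W_single[OF T'c] by simp
    have "wprod G (t # xs) = t \<otimes> (r \<otimes> h)" using rh(3) by simp
    also have "\<dots> = (t \<otimes> r) \<otimes> h" using tc rc hc by (rule m_assoc[symmetric])
    also have "\<dots> = (r' \<otimes> h') \<otimes> h" by (simp only: r'h'(3))
    also have "\<dots> = r' \<otimes> (h' \<otimes> h)" using r'c h'c hc by (rule m_assoc)
    finally have eq: "wprod G (t # xs) = r' \<otimes> (h' \<otimes> h)" .
    have "h' \<otimes> h \<in> W G T' (1 + length xs)" by (rule W_mult[OF T'c h'W rh(2)])
    then have "h' \<otimes> h \<in> W G T' (length (t # xs))" by simp
    then show ?case using eq r'h'(1) by blast
  qed
  interpret K: group "G\<lparr>carrier := H\<rparr>" using subgroup.subgroup_is_group[OF H is_group] .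
  obtain c where c: "lower_central (G\<lparr>carrier := H\<rparr>) c = {\<one>\<^bsub>G\<lparr>carrier := H\<rparr>\<^esub>}"
    using nil unfolding nilpotent_group_def by blast
  interpret N: nilp "G\<lparr>carrier := H\<rparr>" T' c
    by unfold_locales (use T'H finT' c in auto)
  obtain f where f: "polyb f" "\<forall>L. card (W G T' L) \<le> f L"
    using N.nilp_growth unfolding W_sub_eq by blast
  define f' where "f' = (\<lambda>L. card R * f L)"
  have pf': "polyb f'" unfolding f'_def by (intro polyb_mult polyb_const f(1))
  have "card (W G T L) \<le> f' L" for L
  proof -
    have sub: "W G T L \<subseteq> (\<lambda>p. fst p \<otimes> snd p) ` (R \<times> W G T' L)"
    proof
      fix y assume "y \<in> W G T L"
      then obtain xs where xs: "set xs \<subseteq> T" "length xs \<le> L" "y = wprod G xs" by (auto elim: W_memE)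
      obtain r h where rh: "r \<in> R" "h \<in> W G T' (length xs)" "wprod G xs = r \<otimes> h" using claim[OF xs(1)] by blast
      have "h \<in> W G T' L" by (rule subsetD[OF W_mono[OF order_refl xs(2)] rh(2)])
      then have "(r, h) \<in> R \<times> W G T' L" using rh(1) by blast
      moreover have "y = fst (r, h) \<otimes> snd (r, h)" using xs(3) rh(3) by simp
      ultimately show "y \<in> (\<lambda>p. fst p \<otimes> snd p) ` (R \<times> W G T' L)" by blast
    qed
    have finP: "finite (R \<times> W G T' L)" using finR finite_W[OF finT'] by blast
    have "card (W G T L) \<le> card ((\<lambda>p. fst p \<otimes> snd p) ` (R \<times> W G T' L))"
      using sub finP by (intro card_mono) auto
    also have "\<dots> \<le> card (R \<times> W G T' L)" using finP card_image_le by blast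
    also have "\<dots> = card R * card (W G T' L)" by (simp add: card_cartesian_product)
    also have "\<dots> \<le> card R * f L" using f(2) by (intro mult_le_mono2) blast
    finally show ?thesis unfolding f'_def .
  qed
  then show ?thesis using pf' by blast
qed

end


context group begin

lemma aut_iso: "aut_subgroup G A \<Longrightarrow> a \<in> A \<Longrightarrow> a \<in> iso G G"
  unfolding aut_subgroup_def Aut_def by blast

lemma aut_hom: "aut_subgroup G A \<Longrightarrow> a \<in> A \<Longrightarrow> a \<in> hom G G"
  using aut_iso[of A a] unfolding iso_def by simp

lemma aut_bij: "aut_subgroup G A \<Longrightarrow> a \<in> A \<Longrightarrow> bij_betw a (carrier G) (carrier G)"
  using aut_iso[of A a] unfolding iso_def by simp

lemma aut_closed: "aut_subgroup G A \<Longrightarrow> a \<in> A \<Longrightarrow> g \<in> carrier G \<Longrightarrow> a g \<in> carrier G"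
  by (rule hom_in_carrier[OF aut_hom])

lemma aut_mult: "aut_subgroup G A \<Longrightarrow> a \<in> A \<Longrightarrow> x \<in> carrier G \<Longrightarrow> y \<in> carrier G \<Longrightarrow> a (x \<otimes> y) = a x \<otimes> a y"
  by (rule hom_mult[OF aut_hom])

lemma aut_comp: "aut_subgroup G A \<Longrightarrow> a \<in> A \<Longrightarrow> b \<in> A \<Longrightarrow> (\<lambda>x\<in>carrier G. a (b x)) \<in> A"
  unfolding aut_subgroup_def by blast

lemma aut_inv: "aut_subgroup G A \<Longrightarrow> b \<in> A \<Longrightarrow> restrict (inv_into (carrier G) b) (carrier G) \<in> A"
  unfolding aut_subgroup_def by blast

lemma aut_inv_app: "aut_subgroup G A \<Longrightarrow> b \<in> A \<Longrightarrow> y \<in> carrier G \<Longrightarrow> restrict (inv_into (carrier G) b) (carrier G) (b y) = y"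
proof -
  assume A: "aut_subgroup G A" and b: "b \<in> A" and y: "y \<in> carrier G"
  have "inj_on b (carrier G)" using aut_bij[OF A b] bij_betw_def by blast
  moreover have "b y \<in> carrier G" using aut_closed[OF A b y] .
  ultimately show ?thesis using y by simp
qed

lemma orbit_app: assumes A: "aut_subgroup G A" and b: "b \<in> A" and g: "g \<in> carrier G"
  shows "orbit A (b g) = orbit A g"
proof
  show "orbit A (b g) \<subseteq> orbit A g"
  proof
    fix z assume "z \<in> orbit A (b g)"
    then obtain a where a: "a \<in> A" "z = a (b g)" unfolding orbit_def by blast
    have "z = (\<lambda>x\<in>carrier G. a (b x)) g" using a g by simp
    then show "z \<in> orbit A g" unfolding orbit_def using aut_comp[OF A a(1) b] by blast
  qed
next
  show "orbit A g \<subseteq> orbit A (b g)"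
  proof
    fix z assume "z \<in> orbit A g"
    then obtain a where a: "a \<in> A" "z = a g" unfolding orbit_def by blast
    define b' where "b' = restrict (inv_into (carrier G) b) (carrier G)"
    have b'A: "b' \<in> A" unfolding b'_def using aut_inv[OF A b] .
    have "z = (\<lambda>x\<in>carrier G. a (b' x)) (b g)"
      using a aut_closed[OF A b g] aut_inv_app[OF A b g] unfolding b'_def by simp
    then show "z \<in> orbit A (b g)" unfolding orbit_def using aut_comp[OF A a(1) b'A] by blast
  qed
qed

lemma orbit_self: "aut_subgroup G A \<Longrightarrow> g \<in> carrier G \<Longrightarrow> g \<in> orbit A g"
  unfolding orbit_def aut_subgroup_def by (auto intro!: image_eqI[where x="\<lambda>x\<in>carrier G. x"])

lemma rep_props: assumes "x \<in> coset_carrier G A"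
  shows "rep G A x \<in> carrier G \<and> orbit A (rep G A x) = x"
proof -
  have "\<exists>g. g \<in> carrier G \<and> orbit A g = x" using assms unfolding coset_carrier_def by blast
  then show ?thesis unfolding rep_def by (rule someI_ex)
qed

lemma cball_sub:
  assumes A: "aut_subgroup G A" and finA: "finite A" and S: "S \<subseteq> coset_carrier G A"
  defines "TT \<equiv> (\<lambda>p. fst p (rep G A (snd p))) ` (A \<times> S)"
  shows "cball G A S (cunit G A) r \<subseteq> orbit A ` W G TT r"
proof -
  have TTc: "TT \<subseteq> carrier G" unfolding TT_def using rep_props S aut_closed[OF A] by fastforce
  have inv: "set ss \<subseteq> S \<Longrightarrow> \<forall>y\<in>set_mset (cprod G A (cunit G A) ss). \<exists>g\<in>W G TT (length ss). y = orbit A g" for ss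
  proof (induction ss rule: rev_induct)
    case Nil
    then show ?case using W_one[of G TT 0] by (auto simp: cprod_def cunit_def)
  next
    case (snoc s ss)
    have sS: "s \<in> S" using snoc.prems by simp
    have IH: "\<forall>y\<in>set_mset (cprod G A (cunit G A) ss). \<exists>g\<in>W G TT (length ss). y = orbit A g"
      using snoc by auto
    have eq: "cprod G A (cunit G A) (ss @ [s]) = cmult_ms G A (cprod G A (cunit G A) ss) s"
      by (simp add: cprod_def)
    show ?case
    proof
      fix y assume "y \<in> set_mset (cprod G A (cunit G A) (ss @ [s]))"
      then obtain m where m: "m \<in> set_mset (cprod G A (cunit G A) ss)" "y \<in> set_mset (cmult G A m s)"
        unfolding eq cmult_ms_def by auto
      obtain g where g: "g \<in> W G TT (length ss)" "m = orbit A g" using IH m(1) by blast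
      have gc: "g \<in> carrier G" using g(1) W_carrier[OF TTc] by blast
      obtain a where a: "a \<in> A" "y = orbit A (rep G A m \<otimes> a (rep G A s))"
        using m(2) finA unfolding cmult_def by auto
      have mcc: "m \<in> coset_carrier G A" using g(2) gc unfolding coset_carrier_def by blast
      have rm: "rep G A m \<in> carrier G" "orbit A (rep G A m) = m" using rep_props[OF mcc] by auto
      have "rep G A m \<in> orbit A g" using orbit_self[OF A rm(1)] rm(2) g(2) by simp
      then obtain b where b: "b \<in> A" "rep G A m = b g" unfolding orbit_def by blast
      have rs: "rep G A s \<in> carrier G" using rep_props S sS by blast
      have ars: "a (rep G A s) \<in> carrier G" using aut_closed[OF A a(1) rs] .
      define b' where "b' = restrict (inv_into (carrier G) b) (carrier G)"
      have b'A: "b' \<in> A" unfolding b'_def using aut_inv[OF A b(1)] .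
      define t where "t = b' (a (rep G A s))"
      have tc: "t \<in> carrier G" unfolding t_def using aut_closed[OF A b'A ars] .
      have "b g \<otimes> a (rep G A s) = b (g \<otimes> t)"
      proof -
        have "b t = a (rep G A s)"
        proof -
          obtain u where u: "u \<in> carrier G" "b u = a (rep G A s)"
            using aut_bij[OF A b(1)] ars unfolding bij_betw_def by (metis imageE)
          have "t = u" unfolding t_def b'_def using aut_inv_app[OF A b(1) u(1)] u(2) by simp
          then show ?thesis using u(2) by simp
        qed
        then show ?thesis using aut_mult[OF A b(1) gc tc] by simp
      qed
      then have "y = orbit A (b (g \<otimes> t))" using a(2) b(2) by simp
      also have "\<dots> = orbit A (g \<otimes> t)" using orbit_app[OF A b(1)] gc tc by simp
      finally have y: "y = orbit A (g \<otimes> t)" .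
      have "t = (\<lambda>x\<in>carrier G. b' (a x)) (rep G A s)" unfolding t_def using rs by simp
      then have "t \<in> TT" unfolding TT_def using aut_comp[OF A b'A a(1)] sS
        by (intro image_eqI[where x="(\<lambda>x\<in>carrier G. b' (a x), s)"]) auto
      then have tW: "t \<in> W G TT 1" using W_single[OF TTc] by simp
      have "g \<otimes> t \<in> W G TT (length ss + 1)" by (rule W_mult[OF TTc g(1) tW])
      then have "g \<otimes> t \<in> W G TT (length (ss @ [s]))" by simp
      then show "\<exists>g\<in>W G TT (length (ss @ [s])). y = orbit A g" using y by blast
    qed
  qed
  show ?thesis
  proof
    fix y assume "y \<in> cball G A S (cunit G A) r"
    then obtain ss where ss: "length ss \<le> r" "set ss \<subseteq> S" "y \<in> set_mset (cprod G A (cunit G A) ss)"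
      unfolding cball_def by blast
    obtain g where g: "g \<in> W G TT (length ss)" "y = orbit A g" using inv[OF ss(2)] ss(3) by blast
    have "g \<in> W G TT r" by (rule subsetD[OF W_mono[OF order_refl ss(1)] g(1)])
    then show "y \<in> orbit A ` W G TT r" using g(2) by blast
  qed
qed

end


lemma nat_bound: assumes "1 \<le> r" shows "C * Suc r ^ k \<le> (C * 2 ^ k) * r ^ (k + 1)"
proof -
  have "Suc r \<le> 2 * r" using assms by simp
  then have "Suc r ^ k \<le> (2 * r) ^ k" by (rule power_mono) simp
  also have "\<dots> = 2 ^ k * r ^ k" by (simp add: power_mult_distrib)
  also have "\<dots> \<le> 2 ^ k * r ^ (k + 1)"
    using assms by (intro mult_le_mono2 power_increasing) auto
  finally have "Suc r ^ k \<le> 2 ^ k * r ^ (k + 1)" .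
  then have "C * Suc r ^ k \<le> C * (2 ^ k * r ^ (k + 1))" by (rule mult_le_mono2)
  then show ?thesis by (simp add: mult.assoc)
qed

theorem mainTheorem2:
  fixes G :: "('a, 'b) monoid_scheme" and A :: "('a \<Rightarrow> 'a) set" and n :: nat
  assumes "group G"
    and "finitely_generated G"
    and "virtually_nilpotent G"
    and "aut_subgroup G A"
    and "finite A"
    and "card A = n"
  shows "\<forall>S. finite S \<and> cgenerates G A S \<longrightarrow>
           (\<exists>C k::real. C > 0 \<and> k > 0 \<and>
              (\<forall>r::nat. r \<ge> 1 \<longrightarrow> real (card (cball G A S (cunit G A) r)) \<le> C * real r powr k))"
proof (intro allI impI)
  fix S assume S: "finite S \<and> cgenerates G A S"
  interpret group G by (rule assms(1))
  have SC: "S \<subseteq> coset_carrier G A" using S unfolding cgenerates_def by blast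
  define TT where "TT = (\<lambda>p. fst p (rep G A (snd p))) ` (A \<times> S)"
  have finTT: "finite TT" unfolding TT_def using S assms(5) by blast
  have TTc: "TT \<subseteq> carrier G"
  proof
    fix t assume "t \<in> TT"
    then obtain a s where as: "a \<in> A" "s \<in> S" "t = a (rep G A s)" unfolding TT_def by auto
    have "rep G A s \<in> carrier G" using rep_props[of s A] SC as(2) by blast
    then show "t \<in> carrier G" using aut_closed[OF assms(4) as(1)] as(3) by simp
  qed
  obtain H where H: "subgroup H G" "finite (rcosets\<^bsub>G\<^esub> H)" "nilpotent_group (G\<lparr>carrier := H\<rparr>)"
    using assms(3) unfolding virtually_nilpotent_def by blast
  obtain f where f: "polyb f" "\<forall>L. card (W G TT L) \<le> f L"
    using fi_growth[OF H TTc finTT] by blast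
  obtain C k where Ck: "\<forall>r. f r \<le> C * Suc r ^ k" using f(1) unfolding polyb_def by blast
  have bound: "card (cball G A S (cunit G A) r) \<le> (C * 2 ^ k) * r ^ (k + 1)" if r: "1 \<le> r" for r
  proof -
    have "card (cball G A S (cunit G A) r) \<le> card (orbit A ` W G TT r)"
    proof (rule card_mono)
      show "finite (orbit A ` W G TT r)" using finite_W[OF finTT] by blast
      show "cball G A S (cunit G A) r \<subseteq> orbit A ` W G TT r"
        using cball_sub[OF assms(4,5) SC, of r] unfolding TT_def .
    qed
    also have "\<dots> \<le> card (W G TT r)" using finite_W[OF finTT] card_image_le by blast
    also have "\<dots> \<le> f r" using f(2) by blast
    also have "\<dots> \<le> C * Suc r ^ k" using Ck by blast
    also have "\<dots> \<le> (C * 2 ^ k) * r ^ (k + 1)" using nat_bound[OF r] .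
    finally show ?thesis .
  qed
  define C' :: real where "C' = real (C * 2 ^ k) + 1"
  define k' :: real where "k' = real (k + 1)"
  have "\<forall>r::nat. r \<ge> 1 \<longrightarrow> real (card (cball G A S (cunit G A) r)) \<le> C' * real r powr k'"
  proof (intro allI impI)
    fix r :: nat assume r: "r \<ge> 1"
    have "real (card (cball G A S (cunit G A) r)) \<le> real ((C * 2 ^ k) * r ^ (k + 1))"
      using bound[OF r] by linarith
    also have "\<dots> = real (C * 2 ^ k) * real r ^ (k + 1)" by simp
    also have "\<dots> \<le> C' * real r ^ (k + 1)" unfolding C'_def
      by (intro mult_right_mono) auto
    also have "real r ^ (k + 1) = real r powr k'" unfolding k'_def
      using r by (subst powr_realpow) auto
    finally show "real (card (cball G A S (cunit G A) r)) \<le> C' * real r powr k'" .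
  qed
  moreover have "C' > 0" unfolding C'_def
    by (metis add_nonneg_pos of_nat_0_le_iff zero_less_one)
  moreover have "k' > 0" unfolding k'_def by simp
  ultimately show "\<exists>C k::real. C > 0 \<and> k > 0 \<and>
              (\<forall>r::nat. r \<ge> 1 \<longrightarrow> real (card (cball G A S (cunit G A) r)) \<le> C * real r powr k)" by blast
qed


end
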